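(* Let $(X,d)$ be a metric space with $|X|\geqslant 3$ and let $T\colon X\to X$ be a generalized Ćirić–Reich–Rus type mapping, i.e. there exist $\alpha,\lambda\geqslant 0$ with $2\alpha+\frac{3\lambda}{2}<1$ such that $$d(Tx,Ty)+d(Ty,Tz)+d(Tx,Tz)\leqslant \alpha\big(d(x,y)+d(y,z)+d(z,x)\big)+\lambda\big(d(x,Tx)+d(y,Ty)+d(z,Tz)\big)$$ for all pairwise distinct $x,y,z\in X$. Then $T$ is continuous at each of its fixed points. *)

theory Defs
  imports "HOL-Analysis.Analysis"
begin

definition gen_CRR :: "('a::metric_space \<Rightarrow> 'a) \<Rightarrow> bool" where
  "gen_CRR T \<longleftrightarrow> (\<exists>alpha lam::real. alpha \<ge> 0 \<and> lam \<ge> 0 \<and> 2 * alpha + 3 * lam / 2 < 1 \<and>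
     (\<forall>x y z. x \<noteq> y \<and> y \<noteq> z \<and> x \<noteq> z \<longrightarrow>
        dist (T x) (T y) + dist (T y) (T z) + dist (T x) (T z)
        \<le> alpha * (dist x y + dist y z + dist z x)
           + lam * (dist x (T x) + dist y (T y) + dist z (T z))))"

end

theory Submission
  imports Defs
begin

theorem proposition3p4:
  fixes T :: "'a::metric_space \<Rightarrow> 'a"
  assumes "infinite (UNIV :: 'a set) \<or> card (UNIV :: 'a set) \<ge> 3"
    and "gen_CRR T"
  shows "\<forall>x. T x = x \<longrightarrow> isCont T x"
proof (intro allI impI)
  fix x assume fx: "T x = x"
  obtain alpha lam :: real where a0: "alpha \<ge> 0" and l0: "lam \<ge> 0" and al: "2 * alpha + 3 * lam / 2 < 1"
    and H: "\<And>x y z. x \<noteq> y \<Longrightarrow> y \<noteq> z \<Longrightarrow> x \<noteq> z \<Longrightarrow>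
        dist (T x) (T y) + dist (T y) (T z) + dist (T x) (T z)
        \<le> alpha * (dist x y + dist y z + dist z x)
           + lam * (dist x (T x) + dist y (T y) + dist z (T z))"
    using assms(2) unfolding gen_CRR_def by blast
  show "isCont T x"
  proof (cases "\<exists>d0>0. \<forall>z. z \<noteq> x \<longrightarrow> dist z x \<ge> d0")
    case True
    then obtain d0 where d0: "d0 > 0" "\<And>z. z \<noteq> x \<Longrightarrow> dist z x \<ge> d0" by blast
    show ?thesis unfolding continuous_at_eps_delta
    proof (intro allI impI)
      fix e :: real assume "e > 0"
      show "\<exists>d>0. \<forall>x'. dist x' x < d \<longrightarrow> dist (T x') (T x) < e"
        using d0 \<open>e > 0\<close> by (metis dist_self not_le)
    qed
  next
    case False
    hence near: "\<And>r. r > 0 \<Longrightarrow> \<exists>z. z \<noteq> x \<and> dist z x < r" by (meson not_le)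
    define K where "K = 2 * (2 * alpha + lam) / (1 - lam) + 1"
    have l1: "1 - lam > 0" using al a0 by linarith
    have K0: "K > 0" proof -
      have "2 * (2 * alpha + lam) / (1 - lam) \<ge> 0" using l1 a0 l0 by simp
      thus ?thesis unfolding K_def by linarith
    qed
    have key: "dist (T y) x \<le> K * dist y x" if "y \<noteq> x" for y
    proof -
      have r: "dist y x > 0" using that by simp
      obtain z where z: "z \<noteq> x" "dist z x < dist y x" using near[OF r] by blast
      have zy: "z \<noteq> y" using z by auto
      have h: "dist (T x) (T y) + dist (T y) (T z) + dist (T x) (T z)
        \<le> alpha * (dist x y + dist y z + dist z x)
           + lam * (dist x (T x) + dist y (T y) + dist z (T z))"
        using H[of x y z] that z zy by auto
      have t1: "dist y z \<le> dist y x + dist z x" by (metis dist_commute dist_triangle)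
      have t2: "dist y (T y) \<le> dist y x + dist (T y) x" by (metis dist_commute dist_triangle)
      have t3: "dist z (T z) \<le> dist z x + dist (T z) x" by (metis dist_commute dist_triangle)
      have p: "0 \<le> dist (T y) (T z)" by simp
      let ?a = "dist (T y) x" and ?b = "dist (T z) x" and ?r = "dist y x" and ?s = "dist z x"
      have "?a + ?b \<le> alpha * (2 * ?r + 2 * ?s) + lam * (?r + ?a + ?s + ?b)"
      proof -
        have "alpha * (dist x y + dist y z + dist z x) \<le> alpha * (2 * ?r + 2 * ?s)"
          using a0 t1 by (intro mult_left_mono) (auto simp: dist_commute)
        moreover have "lam * (dist x (T x) + dist y (T y) + dist z (T z)) \<le> lam * (?r + ?a + ?s + ?b)"
          using l0 t2 t3 fx by (intro mult_left_mono) auto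
        ultimately show ?thesis using h p fx unfolding dist_commute[of x] by (simp add: dist_commute) (smt (verit) zero_le_dist)
      qed
      hence "(1 - lam) * ?a + (1 - lam) * ?b \<le> (2 * alpha + lam) * (?r + ?s)"
        by (simp add: algebra_simps)
      moreover have "(2 * alpha + lam) * (?r + ?s) \<le> (2 * alpha + lam) * (2 * ?r)"
        using z a0 l0 by (intro mult_left_mono) auto
      moreover have "(1 - lam) * ?b \<ge> 0" using l1 by simp
      ultimately have "(1 - lam) * ?a \<le> 2 * (2 * alpha + lam) * ?r" by linarith
      hence "?a \<le> 2 * (2 * alpha + lam) * ?r / (1 - lam)" using l1 by (simp add: field_simps)
      also have "\<dots> \<le> K * ?r" unfolding K_def using r by (simp add: algebra_simps)
      finally show ?thesis .
    qed
    show ?thesis unfolding continuous_at_eps_delta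
    proof (intro allI impI)
      fix e :: real assume e: "e > 0"
      show "\<exists>d>0. \<forall>x'. dist x' x < d \<longrightarrow> dist (T x') (T x) < e"
      proof (intro exI[of _ "e / K"] conjI allI impI)
        show "e / K > 0" using e K0 by simp
        fix y assume y: "dist y x < e / K"
        show "dist (T y) (T x) < e"
        proof (cases "y = x")
          case True thus ?thesis using e by simp
        next
          case False
          have "dist (T y) x \<le> K * dist y x" using key[OF False] .
          also have "\<dots> < K * (e / K)" using y K0 by (intro mult_strict_left_mono) auto
          finally show ?thesis using K0 fx by simp
        qed
      qed
    qed
  qed
qed

end
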